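(* Let $\varphi:\Lambda\to\Gamma$ be a regular covering map of finite simplicial graphs without isolated vertices. Then the group $\mathrm{FD}(\varphi)$ is commensurable to a subgroup of the Torelli group $\mathrm{IA}(A_\Lambda)$. More precisely, $\mathrm{FD}(\varphi)/(\mathrm{FD}(\varphi)\cap\mathrm{IA}(A_\Lambda))$ is isomorphic to $\mathrm{Deck}(\varphi)$.
   Context: Graphs are finite simplicial graphs; $A_\Gamma=\langle v\in V\Gamma\mid [u,v]=1\text{ for every edge }\{u,v\}\rangle$ is the right-angled Artin group. A covering map of graphs $\varphi:\Lambda\to\Gamma$ is a surjective simplicial map that maps the neighbours of each vertex $u$ bijectively onto the neighbours of $\varphi(u)$; $\mathrm{Deck}(\varphi)$ is the group of graph automorphisms $\mu$ of $\Lambda$ with $\varphi\mu=\varphi$, regarded as a subgroup of $\mathrm{Aut}(A_\Lambda)$ by permuting generators; $\varphi$ is regular if $\mathrm{Deck}(\varphi)$ acts transitively on each fiber. Let $\phi:A_\Lambda\to A_\Gamma$ be the induced homomorphism $u\mapsto\varphi(u)$. $\mathrm{FD}(\varphi)$ is the group of all $F\in\mathrm{Aut}(A_\Lambda)$ with $\phi\circ F=\phi$ (lifts of the identity of $A_\Gamma$). $\mathrm{IA}(A_\Lambda)$ is the kernel of the natural map $\mathrm{Aut}(A_\Lambda)\to\mathrm{GL}(H_1(A_\Lambda))$ given by the action on the abelianization. *)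

theory Defs
  imports "HOL-Algebra.Algebra"
begin

definition simplicial_graph :: "'a set \<Rightarrow> 'a set set \<Rightarrow> bool" where
  "simplicial_graph V E \<longleftrightarrow> (\<forall>e\<in>E. \<exists>u v. e = {u, v} \<and> u \<noteq> v \<and> u \<in> V \<and> v \<in> V)"

definition finite_graph :: "'a set \<Rightarrow> 'a set set \<Rightarrow> bool" where
  "finite_graph V E \<longleftrightarrow> simplicial_graph V E \<and> finite V"

definition nbrs :: "'a set set \<Rightarrow> 'a \<Rightarrow> 'a set" where
  "nbrs E u = {v. {u, v} \<in> E}"

definition no_isolated_vertices :: "'a set \<Rightarrow> 'a set set \<Rightarrow> bool" where
  "no_isolated_vertices V E \<longleftrightarrow> (\<forall>v\<in>V. nbrs E v \<noteq> {})"

definition covering_map ::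
  "'a set \<Rightarrow> 'a set set \<Rightarrow> 'b set \<Rightarrow> 'b set set \<Rightarrow> ('a \<Rightarrow> 'b) \<Rightarrow> bool" where
  "covering_map VL EL VG EG \<phi> \<longleftrightarrow>
     \<phi> ` VL = VG \<and>
     (\<forall>u v. {u, v} \<in> EL \<longrightarrow> {\<phi> u, \<phi> v} \<in> EG) \<and>
     (\<forall>u\<in>VL. bij_betw \<phi> (nbrs EL u) (nbrs EG (\<phi> u)))"

definition graph_auts :: "'a set \<Rightarrow> 'a set set \<Rightarrow> ('a \<Rightarrow> 'a) set" where
  "graph_auts V E = {\<mu> \<in> Bij V. \<forall>u\<in>V. \<forall>v\<in>V. {\<mu> u, \<mu> v} \<in> E \<longleftrightarrow> {u, v} \<in> E}"

definition deck :: "'a set \<Rightarrow> 'a set set \<Rightarrow> ('a \<Rightarrow> 'b) \<Rightarrow> ('a \<Rightarrow> 'a) set" where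
  "deck VL EL \<phi> = {\<mu> \<in> graph_auts VL EL. \<forall>u\<in>VL. \<phi> (\<mu> u) = \<phi> u}"

definition deck_group :: "'a set \<Rightarrow> 'a set set \<Rightarrow> ('a \<Rightarrow> 'b) \<Rightarrow> ('a \<Rightarrow> 'a) monoid" where
  "deck_group VL EL \<phi> = BijGroup VL \<lparr>carrier := deck VL EL \<phi>\<rparr>"

definition regular_covering ::
  "'a set \<Rightarrow> 'a set set \<Rightarrow> 'b set \<Rightarrow> 'b set set \<Rightarrow> ('a \<Rightarrow> 'b) \<Rightarrow> bool" where
  "regular_covering VL EL VG EG \<phi> \<longleftrightarrow>
     covering_map VL EL VG EG \<phi> \<and>
     (\<forall>u\<in>VL. \<forall>u'\<in>VL. \<phi> u = \<phi> u' \<longrightarrow> (\<exists>\<mu>\<in>deck VL EL \<phi>. \<mu> u = u'))"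

text \<open>Words: lists of letters (v, b); b = True means the inverse v^{-1}.\<close>

type_synonym 'a word = "('a \<times> bool) list"

inductive_set raag_step :: "'a set set \<Rightarrow> ('a word \<times> 'a word) set" for E where
  cancel: "(u @ [(a, b), (a, \<not> b)] @ w, u @ w) \<in> raag_step E"
| commute: "{fst x, fst y} \<in> E \<Longrightarrow> (u @ [x, y] @ w, u @ [y, x] @ w) \<in> raag_step E"

definition raag_words :: "'a set \<Rightarrow> 'a word set" where
  "raag_words V = lists (V \<times> UNIV)"

definition raag_eq :: "'a set \<Rightarrow> 'a set set \<Rightarrow> ('a word \<times> 'a word) set" where
  "raag_eq V E = ((raag_step E \<union> (raag_step E)\<inverse>) \<inter> (raag_words V \<times> raag_words V))\<^sup>*"

definition raag_class :: "'a set \<Rightarrow> 'a set set \<Rightarrow> 'a word \<Rightarrow> 'a word set" where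
  "raag_class V E w = raag_eq V E `` {w}"

definition RAAG :: "'a set \<Rightarrow> 'a set set \<Rightarrow> 'a word set monoid" where
  "RAAG V E =
    \<lparr>carrier = raag_class V E ` raag_words V,
     monoid.mult = (\<lambda>P Q. raag_class V E ((SOME p. p \<in> P) @ (SOME q. q \<in> Q))),
     one = raag_class V E []\<rparr>"

definition raag_map ::
  "'a set \<Rightarrow> 'a set set \<Rightarrow> 'b set \<Rightarrow> 'b set set \<Rightarrow> ('a \<Rightarrow> 'b) \<Rightarrow> 'a word set \<Rightarrow> 'b word set" where
  "raag_map VL EL VG EG \<phi> Z =
     raag_class VG EG (map (\<lambda>(v, b). (\<phi> v, b)) (SOME z. z \<in> Z))"

definition FD ::
  "'a set \<Rightarrow> 'a set set \<Rightarrow> 'b set \<Rightarrow> 'b set set \<Rightarrow> ('a \<Rightarrow> 'b) \<Rightarrow> ('a word set \<Rightarrow> 'a word set) set" where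
  "FD VL EL VG EG \<phi> =
     {F \<in> auto (RAAG VL EL).
        \<forall>g\<in>carrier (RAAG VL EL). raag_map VL EL VG EG \<phi> (F g) = raag_map VL EL VG EG \<phi> g}"

definition FD_group ::
  "'a set \<Rightarrow> 'a set set \<Rightarrow> 'b set \<Rightarrow> 'b set set \<Rightarrow> ('a \<Rightarrow> 'b) \<Rightarrow> ('a word set \<Rightarrow> 'a word set) monoid" where
  "FD_group VL EL VG EG \<phi> = AutoGroup (RAAG VL EL) \<lparr>carrier := FD VL EL VG EG \<phi>\<rparr>"

text \<open>IA(G) for a group G: automorphisms inducing the identity on the
  abelianization G / [G,G], i.e. fixing every coset [G,G] g.\<close>

definition IA :: "('g, 'c) monoid_scheme \<Rightarrow> ('g \<Rightarrow> 'g) set" where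
  "IA G = {F \<in> auto G. \<forall>g\<in>carrier G.
              derived G (carrier G) #>\<^bsub>G\<^esub> F g = derived G (carrier G) #>\<^bsub>G\<^esub> g}"

end

theory Submission
  imports Defs
begin


lemma raag_step_ctx:
  assumes "(x, y) \<in> raag_step E" shows "(p @ x @ q, p @ y @ q) \<in> raag_step E"
  using assms
proof (cases rule: raag_step.cases)
  case (cancel u a b w)
  then show ?thesis using raag_step.cancel[where u="p@u" and w="w@q" and a=a and b=b and E=E] by simp
next
  case (commute x' y' u w)
  then show ?thesis using raag_step.commute[where u="p@u" and w="w@q" and x=x' and y=y' and E=E] by simp
qed

lemma raag_words_append[simp]: "xs @ ys \<in> raag_words V \<longleftrightarrow> xs \<in> raag_words V \<and> ys \<in> raag_words V"
  by (auto simp: raag_words_def)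

lemma raag_words_Cons[simp]: "x # ys \<in> raag_words V \<longleftrightarrow> fst x \<in> V \<and> ys \<in> raag_words V"
  by (cases x) (auto simp: raag_words_def)

lemma raag_words_Nil[simp]: "[] \<in> raag_words V"
  by (auto simp: raag_words_def)

lemma raag_eq_words:
  assumes "(x, y) \<in> raag_eq V E"
  shows "x = y \<or> (x \<in> raag_words V \<and> y \<in> raag_words V)"
  using assms unfolding raag_eq_def
  by (induction rule: rtrancl_induct) auto

lemma raag_eq_ctx:
  assumes "(x, y) \<in> raag_eq V E" "p \<in> raag_words V" "q \<in> raag_words V"
  shows "(p @ x @ q, p @ y @ q) \<in> raag_eq V E"
  using assms(1) unfolding raag_eq_def
proof (induction rule: rtrancl_induct)
  case base
  then show ?case by simp
next
  case (step y z)
  have "(p @ y @ q, p @ z @ q) \<in> (raag_step E \<union> (raag_step E)\<inverse>) \<inter> (raag_words V \<times> raag_words V)"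
    using step(2) assms(2,3) raag_step_ctx[of _ _ E p q] by auto
  then show ?case using step(3) by (rule rtrancl_into_rtrancl[rotated])
qed

lemma raag_eq_refl[simp]: "(x, x) \<in> raag_eq V E"
  by (simp add: raag_eq_def)

lemma raag_eq_sym:
  assumes "(x, y) \<in> raag_eq V E" shows "(y, x) \<in> raag_eq V E"
proof -
  let ?T = "(raag_step E \<union> (raag_step E)\<inverse>) \<inter> (raag_words V \<times> raag_words V)"
  have T: "?T\<inverse> = ?T" by auto
  have "(y, x) \<in> (?T\<^sup>*)\<inverse>" using assms by (simp add: raag_eq_def)
  then have "(y, x) \<in> (?T\<inverse>)\<^sup>*" by (simp add: rtrancl_converse)
  then show ?thesis using T by (simp add: raag_eq_def)
qed

lemma raag_eq_trans:
  assumes "(x, y) \<in> raag_eq V E" "(y, z) \<in> raag_eq V E" shows "(x, z) \<in> raag_eq V E"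
  using assms unfolding raag_eq_def by (rule rtrancl_trans)

lemma raag_eq_step:
  assumes "(x, y) \<in> raag_step E" "x \<in> raag_words V" "y \<in> raag_words V"
  shows "(x, y) \<in> raag_eq V E"
  using assms unfolding raag_eq_def by auto

lemma raag_class_eq_iff:
  "raag_class V E x = raag_class V E y \<longleftrightarrow> (x, y) \<in> raag_eq V E"
proof
  assume "raag_class V E x = raag_class V E y"
  moreover have "y \<in> raag_class V E y" by (simp add: raag_class_def)
  ultimately have "y \<in> raag_class V E x" by simp
  then show "(x, y) \<in> raag_eq V E" by (simp add: raag_class_def)
next
  assume xy: "(x, y) \<in> raag_eq V E"
  show "raag_class V E x = raag_class V E y"
    unfolding raag_class_def using xy raag_eq_sym[OF xy]
    by (auto intro: raag_eq_trans)
qed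

lemma raag_class_eqI:
  "(x, y) \<in> raag_eq V E \<Longrightarrow> raag_class V E x = raag_class V E y"
  by (simp add: raag_class_eq_iff)

definition rep :: "'x set \<Rightarrow> 'x" where "rep P = (SOME p. p \<in> P)"

lemma rep_class: "(w, rep (raag_class V E w)) \<in> raag_eq V E"
proof -
  have "w \<in> raag_class V E w" by (simp add: raag_class_def)
  then have "rep (raag_class V E w) \<in> raag_class V E w" unfolding rep_def by (rule someI)
  then show ?thesis by (simp add: raag_class_def)
qed

lemma rep_class_words: "w \<in> raag_words V \<Longrightarrow> rep (raag_class V E w) \<in> raag_words V"
  using raag_eq_words[OF rep_class[of w V E]] by auto

lemma class_rep[simp]: "raag_class V E (rep (raag_class V E w)) = raag_class V E w"
  using rep_class[of w V E] by (simp add: raag_class_eq_iff raag_eq_sym)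

lemma RAAG_carrier: "carrier (RAAG V E) = raag_class V E ` raag_words V"
  by (simp add: RAAG_def)

lemma RAAG_one: "one (RAAG V E) = raag_class V E []"
  by (simp add: RAAG_def)

lemma RAAG_mult_def: "P \<otimes>\<^bsub>RAAG V E\<^esub> Q = raag_class V E (rep P @ rep Q)"
  by (simp add: RAAG_def rep_def)

lemma RAAG_mult:
  assumes "w \<in> raag_words V" "w' \<in> raag_words V"
  shows "raag_class V E w \<otimes>\<^bsub>RAAG V E\<^esub> raag_class V E w' = raag_class V E (w @ w')"
proof -
  let ?r = "rep (raag_class V E w)" and ?r' = "rep (raag_class V E w')"
  have r: "?r \<in> raag_words V" "?r' \<in> raag_words V" using assms rep_class_words by auto
  have "(?r @ ?r', w @ ?r') \<in> raag_eq V E"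
    using raag_eq_ctx[OF raag_eq_sym[OF rep_class[of w V E]], of "[]" ?r'] r by simp
  moreover have "(w @ ?r', w @ w') \<in> raag_eq V E"
    using raag_eq_ctx[OF raag_eq_sym[OF rep_class[of w' V E]], of w "[]"] assms by simp
  ultimately show ?thesis unfolding RAAG_mult_def
    by (simp add: raag_class_eq_iff raag_eq_trans[of _ "w @ ?r'"])
qed

definition winv :: "'a word \<Rightarrow> 'a word" where
  "winv w = rev (map (\<lambda>(a, b). (a, \<not> b)) w)"

lemma winv_simps[simp]: "winv [] = []" "winv (x # w) = winv w @ [(fst x, \<not> snd x)]"
  by (auto simp: winv_def split: prod.splits)

lemma winv_words[simp]: "winv w \<in> raag_words V \<longleftrightarrow> w \<in> raag_words V"
  by (induction w) auto

lemma winv_cancel: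
  assumes "w \<in> raag_words V" shows "(winv w @ w, []) \<in> raag_eq V E"
  using assms
proof (induction w)
  case Nil
  then show ?case by simp
next
  case (Cons x w)
  obtain a b where x: "x = (a, b)" by (cases x)
  have st: "(winv w @ [(a, \<not> b), (a, \<not> \<not> b)] @ w, winv w @ w) \<in> raag_step E"
    by (rule raag_step.cancel)
  have "(winv (x # w) @ x # w, winv w @ w) \<in> raag_eq V E"
    using raag_eq_step[OF st] Cons.prems x by simp
  then show ?case using Cons by (auto intro: raag_eq_trans)
qed

lemma RAAG_group: "group (RAAG V E)"
proof (rule groupI)
  fix x y assume "x \<in> carrier (RAAG V E)" "y \<in> carrier (RAAG V E)"
  then obtain w w' where "w \<in> raag_words V" "w' \<in> raag_words V"
    "x = raag_class V E w" "y = raag_class V E w'" by (auto simp: RAAG_carrier)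
  then show "x \<otimes>\<^bsub>RAAG V E\<^esub> y \<in> carrier (RAAG V E)"
    by (simp add: RAAG_mult RAAG_carrier)
next
  show "\<one>\<^bsub>RAAG V E\<^esub> \<in> carrier (RAAG V E)"
    by (auto simp: RAAG_one RAAG_carrier)
next
  fix x y z assume "x \<in> carrier (RAAG V E)" "y \<in> carrier (RAAG V E)" "z \<in> carrier (RAAG V E)"
  then obtain w w' w'' where "w \<in> raag_words V" "w' \<in> raag_words V" "w'' \<in> raag_words V"
    "x = raag_class V E w" "y = raag_class V E w'" "z = raag_class V E w''" by (auto simp: RAAG_carrier)
  then show "x \<otimes>\<^bsub>RAAG V E\<^esub> y \<otimes>\<^bsub>RAAG V E\<^esub> z = x \<otimes>\<^bsub>RAAG V E\<^esub> (y \<otimes>\<^bsub>RAAG V E\<^esub> z)"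
    by (simp add: RAAG_mult)
next
  fix x assume "x \<in> carrier (RAAG V E)"
  then obtain w where "w \<in> raag_words V" "x = raag_class V E w" by (auto simp: RAAG_carrier)
  then show "\<one>\<^bsub>RAAG V E\<^esub> \<otimes>\<^bsub>RAAG V E\<^esub> x = x"
    by (simp add: RAAG_mult RAAG_one)
next
  fix x assume "x \<in> carrier (RAAG V E)"
  then obtain w where w: "w \<in> raag_words V" "x = raag_class V E w" by (auto simp: RAAG_carrier)
  show "\<exists>y\<in>carrier (RAAG V E). y \<otimes>\<^bsub>RAAG V E\<^esub> x = \<one>\<^bsub>RAAG V E\<^esub>"
  proof (intro bexI)
    show "raag_class V E (winv w) \<in> carrier (RAAG V E)" using w by (simp add: RAAG_carrier)
    show "raag_class V E (winv w) \<otimes>\<^bsub>RAAG V E\<^esub> x = \<one>\<^bsub>RAAG V E\<^esub>"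
      using w by (simp add: RAAG_mult RAAG_one raag_class_eq_iff winv_cancel)
  qed
qed



definition sg :: "bool \<Rightarrow> int" where "sg b = (if b then -1 else 1)"

lemma sg_simps[simp]: "sg b + sg (\<not> b) = 0" "sg b * sg b = 1" "sg (\<not> b) = - sg b"
  by (auto simp: sg_def)

definition ex :: "'a \<Rightarrow> 'a word \<Rightarrow> int" where
  "ex a w = sum_list (map (\<lambda>l. if fst l = a then sg (snd l) else 0) w)"

lemma ex_simps[simp]: "ex a [] = 0" "ex a (l # w) = (if fst l = a then sg (snd l) else 0) + ex a w"
  "ex a (w @ w') = ex a w + ex a w'"
  by (auto simp: ex_def)

lemma ex_step: "(x, y) \<in> raag_step E \<Longrightarrow> ex a x = ex a y"
  by (induction rule: raag_step.induct) auto

lemma ex_eq: "(x, y) \<in> raag_eq V E \<Longrightarrow> ex a x = ex a y"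
  unfolding raag_eq_def
  by (induction rule: rtrancl_induct) (auto dest: ex_step[where a=a])

definition exG :: "'a \<Rightarrow> 'a word set \<Rightarrow> int" where "exG a P = ex a (rep P)"

lemma exG_class[simp]: "exG a (raag_class V E w) = ex a w"
  unfolding exG_def using ex_eq[OF rep_class[of w V E]] by simp

lemma exG_mult:
  assumes "P \<in> carrier (RAAG V E)" "Q \<in> carrier (RAAG V E)"
  shows "exG a (P \<otimes>\<^bsub>RAAG V E\<^esub> Q) = exG a P + exG a Q"
  using assms by (auto simp: RAAG_carrier RAAG_mult)

lemma exG_one[simp]: "exG a (\<one>\<^bsub>RAAG V E\<^esub>) = 0"
  by (simp add: RAAG_one)

lemma exG_inv:
  assumes "P \<in> carrier (RAAG V E)"
  shows "exG a (inv\<^bsub>RAAG V E\<^esub> P) = - exG a P"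
proof -
  interpret G: group "RAAG V E" by (rule RAAG_group)
  have "exG a (inv\<^bsub>RAAG V E\<^esub> P \<otimes>\<^bsub>RAAG V E\<^esub> P) = 0" using assms by simp
  then show ?thesis using assms exG_mult[of "inv\<^bsub>RAAG V E\<^esub> P" V E P a] by simp
qed

definition gen :: "'a set \<Rightarrow> 'a set set \<Rightarrow> 'a \<Rightarrow> 'a word set" where
  "gen V E u = raag_class V E [(u, False)]"

lemma gen_carrier: "u \<in> V \<Longrightarrow> gen V E u \<in> carrier (RAAG V E)"
  by (auto simp: gen_def RAAG_carrier)

lemma class_carrier: "w \<in> raag_words V \<Longrightarrow> raag_class V E w \<in> carrier (RAAG V E)"
  by (auto simp: RAAG_carrier)

lemma class_Cons:
  assumes "fst l \<in> V" "w \<in> raag_words V"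
  shows "raag_class V E (l # w) = raag_class V E [l] \<otimes>\<^bsub>RAAG V E\<^esub> raag_class V E w"
  using assms by (simp add: RAAG_mult)

lemma class_letter_inv:
  assumes "a \<in> V"
  shows "raag_class V E [(a, \<not> b)] = inv\<^bsub>RAAG V E\<^esub> raag_class V E [(a, b)]"
proof -
  interpret G: group "RAAG V E" by (rule RAAG_group)
  have st: "([] @ [(a, \<not> b), (a, \<not> \<not> b)] @ [], [] @ []) \<in> raag_step E"
    by (rule raag_step.cancel)
  have "raag_class V E [(a, \<not> b)] \<otimes>\<^bsub>RAAG V E\<^esub> raag_class V E [(a, b)] = \<one>\<^bsub>RAAG V E\<^esub>"
    using raag_eq_step[OF st, of V] assms by (simp add: RAAG_mult RAAG_one raag_class_eq_iff)
  then show ?thesis using assms by (intro G.inv_equality[symmetric]) (auto intro: class_carrier)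
qed

lemma class_letter:
  assumes "a \<in> V"
  shows "raag_class V E [(a, b)] = (if b then inv\<^bsub>RAAG V E\<^esub> gen V E a else gen V E a)"
  using class_letter_inv[OF assms, where b=False] by (auto simp: gen_def)

lemma ex_nonneg_no_flip:
  assumes "(a, \<not> b) \<notin> set w" shows "sg b * ex a w \<ge> 0"
  using assms by (induction w) (auto simp: sg_def algebra_simps)

lemma zero_ex_derived:
  assumes "w \<in> raag_words V" "\<forall>a. ex a w = 0"
  shows "raag_class V E w \<in> derived (RAAG V E) (carrier (RAAG V E))"
  using assms
proof (induction w rule: length_induct)
  case (1 w)
  interpret G: group "RAAG V E" by (rule RAAG_group)
  have sub: "subgroup (derived (RAAG V E) (carrier (RAAG V E))) (RAAG V E)"
    by (rule G.derived_is_subgroup) simp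
  show ?case
  proof (cases w)
    case Nil
    then show ?thesis using subgroup.one_closed[OF sub] by (simp add: RAAG_one)
  next
    case (Cons l w')
    obtain a b where l: "l = (a, b)" by (cases l)
    have "(a, \<not> b) \<in> set w'"
    proof (rule ccontr)
      assume "(a, \<not> b) \<notin> set w'"
      then have "sg b * ex a w' \<ge> 0" by (rule ex_nonneg_no_flip)
      moreover have "ex a w = 0" using 1 by simp
      then have "sg b * ex a w = 0" by simp
      ultimately show False using Cons l by (simp add: algebra_simps)
    qed
    then obtain w1 w2 where w': "w' = w1 @ (a, \<not> b) # w2" by (auto dest: split_list)
    have aV: "a \<in> V" and w1: "w1 \<in> raag_words V" and w2: "w2 \<in> raag_words V"
      using 1(2) Cons l w' by auto
    define x where "x = raag_class V E [(a, b)]"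
    define c1 where "c1 = raag_class V E w1"
    define c2 where "c2 = raag_class V E w2"
    have xc: "x \<in> carrier (RAAG V E)" "c1 \<in> carrier (RAAG V E)" "c2 \<in> carrier (RAAG V E)"
      using aV w1 w2 by (auto simp: x_def c1_def c2_def intro: class_carrier)
    have "raag_class V E w = x \<otimes>\<^bsub>RAAG V E\<^esub> (c1 \<otimes>\<^bsub>RAAG V E\<^esub> (inv\<^bsub>RAAG V E\<^esub> x \<otimes>\<^bsub>RAAG V E\<^esub> c2))"
      using aV w1 w2 unfolding x_def c1_def c2_def class_letter_inv[OF aV, symmetric]
      by (simp add: RAAG_mult Cons l w')
    also have "\<dots> = (x \<otimes>\<^bsub>RAAG V E\<^esub> c1 \<otimes>\<^bsub>RAAG V E\<^esub> inv\<^bsub>RAAG V E\<^esub> x \<otimes>\<^bsub>RAAG V E\<^esub> inv\<^bsub>RAAG V E\<^esub> c1)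
        \<otimes>\<^bsub>RAAG V E\<^esub> (c1 \<otimes>\<^bsub>RAAG V E\<^esub> c2)"
    proof -
      have "inv\<^bsub>RAAG V E\<^esub> c1 \<otimes>\<^bsub>RAAG V E\<^esub> (c1 \<otimes>\<^bsub>RAAG V E\<^esub> c2) = c2"
        using xc by (simp add: G.m_assoc[symmetric])
      then show ?thesis using xc by (simp add: G.m_assoc)
    qed
    finally have eq: "raag_class V E w = (x \<otimes>\<^bsub>RAAG V E\<^esub> c1 \<otimes>\<^bsub>RAAG V E\<^esub> inv\<^bsub>RAAG V E\<^esub> x \<otimes>\<^bsub>RAAG V E\<^esub> inv\<^bsub>RAAG V E\<^esub> c1)
        \<otimes>\<^bsub>RAAG V E\<^esub> (c1 \<otimes>\<^bsub>RAAG V E\<^esub> c2)" .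
    have comm: "x \<otimes>\<^bsub>RAAG V E\<^esub> c1 \<otimes>\<^bsub>RAAG V E\<^esub> inv\<^bsub>RAAG V E\<^esub> x \<otimes>\<^bsub>RAAG V E\<^esub> inv\<^bsub>RAAG V E\<^esub> c1
        \<in> derived (RAAG V E) (carrier (RAAG V E))"
      unfolding derived_def using xc by (intro generate.incl) blast
    have "c1 \<otimes>\<^bsub>RAAG V E\<^esub> c2 = raag_class V E (w1 @ w2)"
      using w1 w2 by (simp add: c1_def c2_def RAAG_mult)
    moreover have "raag_class V E (w1 @ w2) \<in> derived (RAAG V E) (carrier (RAAG V E))"
    proof -
      have len: "length (w1 @ w2) < length w" using Cons w' by simp
      have ww: "w1 @ w2 \<in> raag_words V" using w1 w2 by simp
      have zz: "\<forall>a. ex a (w1 @ w2) = 0"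
      proof
        fix a'
        have "ex a' w = 0" using 1 by simp
        then show "ex a' (w1 @ w2) = 0" using Cons l w' by (auto split: if_splits)
      qed
      show ?thesis using 1(1) len ww zz by blast
    qed
    ultimately show ?thesis using eq comm subgroup.m_closed[OF sub] by metis
  qed
qed

lemma derived_zero_ex:
  assumes "P \<in> derived (RAAG V E) (carrier (RAAG V E))"
  shows "exG a P = 0"
  using assms unfolding derived_def
proof (induction rule: generate.induct)
  case one
  then show ?case by simp
next
  case (incl h)
  interpret G: group "RAAG V E" by (rule RAAG_group)
  from incl obtain h1 h2 where h: "h1 \<in> carrier (RAAG V E)" "h2 \<in> carrier (RAAG V E)"
    "h = h1 \<otimes>\<^bsub>RAAG V E\<^esub> h2 \<otimes>\<^bsub>RAAG V E\<^esub> inv\<^bsub>RAAG V E\<^esub> h1 \<otimes>\<^bsub>RAAG V E\<^esub> inv\<^bsub>RAAG V E\<^esub> h2" by blast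
  then show ?case by (simp add: exG_mult exG_inv)
next
  case (inv h)
  interpret G: group "RAAG V E" by (rule RAAG_group)
  from inv obtain h1 h2 where h: "h1 \<in> carrier (RAAG V E)" "h2 \<in> carrier (RAAG V E)"
    "h = h1 \<otimes>\<^bsub>RAAG V E\<^esub> h2 \<otimes>\<^bsub>RAAG V E\<^esub> inv\<^bsub>RAAG V E\<^esub> h1 \<otimes>\<^bsub>RAAG V E\<^esub> inv\<^bsub>RAAG V E\<^esub> h2" by blast
  then show ?case by (simp add: exG_mult exG_inv)
next
  case (eng h1 h2)
  interpret G: group "RAAG V E" by (rule RAAG_group)
  have "h1 \<in> carrier (RAAG V E)" "h2 \<in> carrier (RAAG V E)"
    using eng(1,2) G.derived_in_carrier[of "carrier (RAAG V E)"] unfolding derived_def by auto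
  then show ?case using eng by (simp add: exG_mult)
qed

lemma derived_iff_ex:
  assumes "P \<in> carrier (RAAG V E)"
  shows "P \<in> derived (RAAG V E) (carrier (RAAG V E)) \<longleftrightarrow> (\<forall>a. exG a P = 0)"
  using assms derived_zero_ex zero_ex_derived by (fastforce simp: RAAG_carrier)

lemma IA_iff:
  assumes "F \<in> auto (RAAG V E)"
  shows "F \<in> IA (RAAG V E) \<longleftrightarrow> (\<forall>g\<in>carrier (RAAG V E). \<forall>a. exG a (F g) = exG a g)"
proof -
  interpret G: group "RAAG V E" by (rule RAAG_group)
  let ?H = "derived (RAAG V E) (carrier (RAAG V E))"
  have sub: "subgroup ?H (RAAG V E)" by (rule G.derived_is_subgroup) simp
  have Fc: "F g \<in> carrier (RAAG V E)" if "g \<in> carrier (RAAG V E)" for g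
    using assms that by (auto simp: auto_def hom_def)
  have cos: "?H #>\<^bsub>RAAG V E\<^esub> x = ?H #>\<^bsub>RAAG V E\<^esub> y \<longleftrightarrow> x \<otimes>\<^bsub>RAAG V E\<^esub> inv\<^bsub>RAAG V E\<^esub> y \<in> ?H"
    if "x \<in> carrier (RAAG V E)" "y \<in> carrier (RAAG V E)" for x y
  proof
    assume "?H #>\<^bsub>RAAG V E\<^esub> x = ?H #>\<^bsub>RAAG V E\<^esub> y"
    then have "x \<in> ?H #>\<^bsub>RAAG V E\<^esub> y" using G.rcos_self[OF that(1) sub] by simp
    then show "x \<otimes>\<^bsub>RAAG V E\<^esub> inv\<^bsub>RAAG V E\<^esub> y \<in> ?H"
      using subgroup.rcos_module_imp[OF sub G.is_group that(2)] by blast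
  next
    assume "x \<otimes>\<^bsub>RAAG V E\<^esub> inv\<^bsub>RAAG V E\<^esub> y \<in> ?H"
    then have "x \<in> ?H #>\<^bsub>RAAG V E\<^esub> y"
      using subgroup.rcos_module_rev[OF sub G.is_group that(2) that(1)] by blast
    then show "?H #>\<^bsub>RAAG V E\<^esub> x = ?H #>\<^bsub>RAAG V E\<^esub> y"
      using G.repr_independence[OF _ that(2) sub] by simp
  qed
  have "(?H #>\<^bsub>RAAG V E\<^esub> F g = ?H #>\<^bsub>RAAG V E\<^esub> g) \<longleftrightarrow> (\<forall>a. exG a (F g) = exG a g)"
    if "g \<in> carrier (RAAG V E)" for g
    using that Fc[OF that] by (simp add: cos derived_iff_ex exG_mult exG_inv)
  then show ?thesis using assms unfolding IA_def by auto
qed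



fun hm :: "int \<times> int \<times> int \<Rightarrow> int \<times> int \<times> int \<Rightarrow> int \<times> int \<times> int" where
  "hm (p, q, r) (p', q', r') = (p + p', q + q', r + r' + p * q')"

lemma hm_assoc: "hm (hm x y) z = hm x (hm y z)"
  by (cases x; cases y; cases z) (simp add: algebra_simps)

lemma hm_zero[simp]: "hm (0, 0, 0) x = x" "hm x (0, 0, 0) = x"
  by (cases x; simp)+

definition hg :: "'a \<Rightarrow> 'a \<Rightarrow> 'a \<times> bool \<Rightarrow> int \<times> int \<times> int" where
  "hg a b l = (if fst l = a then (sg (snd l), 0, 0) else if fst l = b then (0, sg (snd l), 0) else (0, 0, 0))"

definition heis :: "'a \<Rightarrow> 'a \<Rightarrow> 'a word \<Rightarrow> int \<times> int \<times> int" where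
  "heis a b w = foldr (\<lambda>l acc. hm (hg a b l) acc) w (0, 0, 0)"

lemma heis_Nil[simp]: "heis a b [] = (0, 0, 0)" by (simp add: heis_def)
lemma heis_Cons[simp]: "heis a b (l # w) = hm (hg a b l) (heis a b w)" by (simp add: heis_def)

lemma heis_append: "heis a b (w @ w') = hm (heis a b w) (heis a b w')"
  by (induction w) (auto simp: hm_assoc)

lemma heis_ex: "a \<noteq> b \<Longrightarrow> fst (heis a b w) = ex a w \<and> fst (snd (heis a b w)) = ex b w"
proof (induction w)
  case Nil then show ?case by simp
next
  case (Cons l w)
  obtain p q r where h: "heis a b w = (p, q, r)" by (cases "heis a b w")
  then show ?case using Cons by (auto simp: hg_def)
qed

lemma heis_step:
  assumes "(x, y) \<in> raag_step E" "a \<noteq> b" "{a, b} \<notin> E" "\<forall>c. {c} \<notin> E"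
  shows "heis a b x = heis a b y"
  using assms(1)
proof (cases rule: raag_step.cases)
  case (cancel u c d w)
  have "hm (hg a b (c, d)) (hg a b (c, \<not> d)) = (0, 0, 0)"
    by (auto simp: hg_def)
  then have "hm (hg a b (c, d)) (hm (hg a b (c, \<not> d)) (heis a b w)) = heis a b w"
    by (metis hm_assoc hm_zero(1))
  then show ?thesis using cancel by (simp add: heis_append)
next
  case (commute x' y' u w)
  have "hm (hg a b x') (hg a b y') = hm (hg a b y') (hg a b x')"
  proof -
    have ne: "fst x' \<noteq> fst y'"
    proof
      assume "fst x' = fst y'"
      then have "{fst x'} \<in> E" using commute(3) by simp
      then show False using assms(4) by blast
    qed
    have "hg a b x' = (0, 0, 0) \<or> hg a b y' = (0, 0, 0)"
      using commute(3) ne assms(3) by (auto simp: hg_def insert_commute)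
    then show ?thesis by auto
  qed
  then have "hm (hg a b x') (hm (hg a b y') (heis a b w)) = hm (hg a b y') (hm (hg a b x') (heis a b w))"
    by (metis hm_assoc)
  then show ?thesis using commute by (simp add: heis_append)
qed

lemma heis_eq:
  assumes "(x, y) \<in> raag_eq V E" "a \<noteq> b" "{a, b} \<notin> E" "\<forall>c. {c} \<notin> E"
  shows "heis a b x = heis a b y"
  using assms(1) unfolding raag_eq_def
proof (induction rule: rtrancl_induct)
  case base then show ?case by simp
next
  case (step y z)
  then show ?case using heis_step[OF _ assms(2-4), of y z] heis_step[OF _ assms(2-4), of z y] by auto
qed


lemma commute_minor:
  assumes "P \<in> carrier (RAAG V E)" "Q \<in> carrier (RAAG V E)"
    and "P \<otimes>\<^bsub>RAAG V E\<^esub> Q = Q \<otimes>\<^bsub>RAAG V E\<^esub> P"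
    and "a \<noteq> b" "{a, b} \<notin> E" "\<forall>c. {c} \<notin> E"
  shows "exG a P * exG b Q = exG a Q * exG b P"
proof -
  let ?p = "rep P" and ?q = "rep Q"
  have "(?p @ ?q, ?q @ ?p) \<in> raag_eq V E"
    using assms(3) unfolding RAAG_mult_def raag_class_eq_iff .
  then have h: "heis a b (?p @ ?q) = heis a b (?q @ ?p)" by (rule heis_eq[OF _ assms(4-6)])
  obtain p1 p2 p3 where hp: "heis a b ?p = (p1, p2, p3)" by (cases "heis a b ?p")
  obtain q1 q2 q3 where hq: "heis a b ?q = (q1, q2, q3)" by (cases "heis a b ?q")
  have e: "p1 = exG a P" "p2 = exG b P" "q1 = exG a Q" "q2 = exG b Q"
    using heis_ex[OF assms(4), of ?p] heis_ex[OF assms(4), of ?q] hp hq by (auto simp: exG_def)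
  have "hm (p1, p2, p3) (q1, q2, q3) = hm (q1, q2, q3) (p1, p2, p3)"
    using h hp hq by (simp only: heis_append)
  then have "p1 * q2 = q1 * p2" by simp
  then show ?thesis using e by simp
qed

definition mapw :: "('a \<Rightarrow> 'b) \<Rightarrow> 'a word \<Rightarrow> 'b word" where
  "mapw f w = map (\<lambda>(v, b). (f v, b)) w"

lemma mapw_simps[simp]: "mapw f [] = []" "mapw f (l # w) = (f (fst l), snd l) # mapw f w"
  "mapw f (w @ w') = mapw f w @ mapw f w'"
  by (auto simp: mapw_def split: prod.splits)

lemma ex_mapw:
  assumes "w \<in> raag_words A" "finite A"
  shows "ex x (mapw f w) = (\<Sum>a\<in>{a\<in>A. f a = x}. ex a w)"
  using assms(1)
proof (induction w)
  case Nil then show ?case by simp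
next
  case (Cons l w)
  have fin: "finite {a\<in>A. f a = x}" using assms(2) by simp
  have "(\<Sum>a\<in>{a\<in>A. f a = x}. (if fst l = a then sg (snd l) else 0))
        = (if f (fst l) = x then sg (snd l) else 0)"
    using Cons.prems fin by (simp add: sum.delta)
  then show ?case using Cons by (simp add: sum.distrib)
qed

lemma hom_expand:
  assumes F: "F \<in> hom (RAAG V E) (RAAG V E)" and fin: "finite V"
    and gen: "\<And>u a. u \<in> V \<Longrightarrow> exG a (F (gen V E u)) = (if a = \<sigma> u then 1 else 0)"
    and w: "w \<in> raag_words V"
  shows "exG a (F (raag_class V E w)) = (\<Sum>b\<in>{b\<in>V. \<sigma> b = a}. ex b w)"
  using w
proof (induction w)
  case Nil
  interpret h: group_hom "RAAG V E" "RAAG V E" F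
    using F RAAG_group by (auto simp: group_hom_def group_hom_axioms_def)
  show ?case using h.hom_one by (simp add: RAAG_one[symmetric])
next
  case (Cons l w)
  interpret h: group_hom "RAAG V E" "RAAG V E" F
    using F RAAG_group by (auto simp: group_hom_def group_hom_axioms_def)
  obtain c d where l: "l = (c, d)" by (cases l)
  have c: "c \<in> V" and wV: "w \<in> raag_words V" using Cons.prems l by auto
  have fin': "finite {b\<in>V. \<sigma> b = a}" using fin by simp
  have e1: "exG a (F (raag_class V E [l])) = (if \<sigma> c = a then sg d else 0)"
  proof (cases d)
    case True
    then show ?thesis using c l gen[OF c, of a]
      by (simp add: class_letter h.hom_inv gen_carrier exG_inv h.hom_closed sg_def)
  next
    case False
    then show ?thesis using c l gen[OF c, of a] by (simp add: class_letter sg_def)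
  qed
  have "exG a (F (raag_class V E (l # w))) = exG a (F (raag_class V E [l])) + exG a (F (raag_class V E w))"
    using c wV l class_Cons[of l V w E] by (simp add: exG_mult h.hom_closed class_carrier)
  also have "\<dots> = (if \<sigma> c = a then sg d else 0) + (\<Sum>b\<in>{b\<in>V. \<sigma> b = a}. ex b w)"
    using e1 Cons.IH wV by simp
  also have "(if \<sigma> c = a then sg d else 0) = (\<Sum>b\<in>{b\<in>V. \<sigma> b = a}. (if c = b then sg d else 0))"
    using c fin' by (simp add: sum.delta)
  finally have calc: "exG a (F (raag_class V E (l # w))) = (\<Sum>b\<in>{b\<in>V. \<sigma> b = a}. (if c = b then sg d else 0)) + (\<Sum>b\<in>{b\<in>V. \<sigma> b = a}. ex b w)" .
  have ex_l: "\<And>b. ex b (l # w) = (if c = b then sg d else 0) + ex b w" using l by simp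
  show ?case using calc by (simp only: ex_l sum.distrib)
qed



lemma sum_single_support:
  assumes "finite S" "a \<in> S" "\<And>b. b \<in> S \<Longrightarrow> b \<noteq> a \<Longrightarrow> f b = 0"
  shows "sum f S = f a"
proof -
  have "sum f S = f a + sum f (S - {a})" using assms(1,2) by (simp add: sum.remove)
  also have "sum f (S - {a}) = 0" using assms(3) by (intro sum.neutral) auto
  finally show ?thesis by simp
qed

lemma perm_lemma:
  fixes m :: "'a \<Rightarrow> 'a \<Rightarrow> int" and \<phi> :: "'a \<Rightarrow> 'b"
  assumes fin: "finite VL"
    and EV: "\<And>u v. {u, v} \<in> EL \<Longrightarrow> u \<in> VL \<and> v \<in> VL"
    and E\<phi>: "\<And>u v. {u, v} \<in> EL \<Longrightarrow> \<phi> u \<noteq> \<phi> v"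
    and inj: "\<And>c. c \<in> VL \<Longrightarrow> inj_on \<phi> (nbrs EL c)"
    and noiso: "\<And>u. u \<in> VL \<Longrightarrow> \<exists>v. {u, v} \<in> EL"
    and supp: "\<And>u a. u \<in> VL \<Longrightarrow> a \<notin> VL \<Longrightarrow> m u a = 0"
    and A: "\<And>u x. u \<in> VL \<Longrightarrow> (\<Sum>a\<in>{a\<in>VL. \<phi> a = x}. m u a) = (if x = \<phi> u then 1 else 0)"
    and B: "\<And>u v a b. {u, v} \<in> EL \<Longrightarrow> a \<in> VL \<Longrightarrow> b \<in> VL \<Longrightarrow> a \<noteq> b \<Longrightarrow> {a, b} \<notin> EL
             \<Longrightarrow> m u a * m v b = m u b * m v a"
    and u: "u \<in> VL"
  shows "\<exists>a\<in>VL. \<phi> a = \<phi> u \<and> (\<forall>b. m u b = (if b = a then 1 else 0))"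
proof -
  obtain v where uv: "{u, v} \<in> EL" using noiso[OF u] by blast
  have vV: "v \<in> VL" using EV[OF uv] by simp
  define y where "y = \<phi> v"
  have yne: "y \<noteq> \<phi> u" using E\<phi>[OF uv] y_def by simp
  have vu: "{v, u} \<in> EL" using uv by (simp add: insert_commute)
  let ?Fy = "{a\<in>VL. \<phi> a = y}"
  have finF: "finite {a\<in>VL. \<phi> a = x}" for x using fin by simp
  have step1: "m u c = 0" if c: "c \<in> VL" "\<phi> c = y" for c
  proof -
    have "(\<Sum>c'\<in>?Fy. m v c * m u c' - m v c' * m u c) = 0"
    proof (intro sum.neutral ballI)
      fix c' assume c': "c' \<in> ?Fy"
      show "m v c * m u c' - m v c' * m u c = 0"
      proof (cases "c' = c")
        case True then show ?thesis by simp
      next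
        case False
        have "{c, c'} \<notin> EL" using E\<phi>[of c c'] c c' by auto
        then show ?thesis using B[OF vu, of c c'] c c' False by auto
      qed
    qed
    moreover have "(\<Sum>c'\<in>?Fy. m v c * m u c' - m v c' * m u c)
        = m v c * (\<Sum>c'\<in>?Fy. m u c') - (\<Sum>c'\<in>?Fy. m v c') * m u c"
      by (simp add: sum_subtractf sum_distrib_left sum_distrib_right)
    moreover have "(\<Sum>c'\<in>?Fy. m u c') = 0" using A[OF u, of y] yne by simp
    moreover have "(\<Sum>c'\<in>?Fy. m v c') = 1" using A[OF vV, of y] y_def by simp
    ultimately show ?thesis by simp
  qed
  obtain c0 where c0: "c0 \<in> VL" "\<phi> c0 = y" "m v c0 \<noteq> 0"
  proof -
    have "(\<Sum>c'\<in>?Fy. m v c') = 1" using A[OF vV, of y] y_def by simp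
    then obtain c' where "c' \<in> ?Fy" "m v c' \<noteq> 0" by (metis (no_types, lifting) sum.neutral zero_neq_one)
    then show ?thesis using that by auto
  qed
  have step3: "b \<in> VL \<and> {c0, b} \<in> EL" if b: "m u b \<noteq> 0" for b
  proof -
    have bV: "b \<in> VL" using supp[OF u] b by blast
    have "\<phi> b \<noteq> y" using step1[OF bV] b by auto
    then have bc: "b \<noteq> c0" using c0 by auto
    have "{b, c0} \<in> EL"
    proof (rule ccontr)
      assume "{b, c0} \<notin> EL"
      then have "m u b * m v c0 = m u c0 * m v b" using B[OF uv bV c0(1) bc] by simp
      then show False using step1[OF c0(1,2)] b c0(3) by simp
    qed
    then show ?thesis using bV by (simp add: insert_commute)
  qed
  have step4: "b1 = b2" if "m u b1 \<noteq> 0" "m u b2 \<noteq> 0" "\<phi> b1 = \<phi> b2" for b1 b2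
  proof -
    have "b1 \<in> nbrs EL c0" "b2 \<in> nbrs EL c0" using step3 that by (auto simp: nbrs_def)
    then show ?thesis using inj[OF c0(1)] that(3) by (auto dest: inj_onD)
  qed
  have single: "(\<Sum>a\<in>{a\<in>VL. \<phi> a = \<phi> b}. m u a) = m u b" if "m u b \<noteq> 0" "b \<in> VL" for b
    using that step4 finF by (intro sum_single_support) auto
  obtain a where a: "a \<in> VL" "\<phi> a = \<phi> u" "m u a \<noteq> 0"
  proof -
    have "(\<Sum>a\<in>{a\<in>VL. \<phi> a = \<phi> u}. m u a) = 1" using A[OF u, of "\<phi> u"] by simp
    then obtain a where "a \<in> {a\<in>VL. \<phi> a = \<phi> u}" "m u a \<noteq> 0" by (metis (no_types, lifting) sum.neutral zero_neq_one)
    then show ?thesis using that by auto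
  qed
  have ma: "m u a = 1" using single[OF a(3) a(1)] A[OF u, of "\<phi> u"] a(2) by simp
  have "m u b = 0" if "b \<noteq> a" for b
  proof (rule ccontr)
    assume nz: "m u b \<noteq> 0"
    then have bV: "b \<in> VL" using supp[OF u] by blast
    show False
    proof (cases "\<phi> b = \<phi> u")
      case True then show False using step4[OF nz a(3)] a(2) that by simp
    next
      case False
      then show False using single[OF nz bV] A[OF u, of "\<phi> b"] nz by simp
    qed
  qed
  then show ?thesis using a ma by auto
qed



lemma ex_notin: "w \<in> raag_words V \<Longrightarrow> a \<notin> V \<Longrightarrow> ex a w = 0"
  by (induction w) auto

lemma rep_carrier_words: "P \<in> carrier (RAAG V E) \<Longrightarrow> rep P \<in> raag_words V"
  by (auto simp: RAAG_carrier intro: rep_class_words)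

lemma carrier_class_rep: "P \<in> carrier (RAAG V E) \<Longrightarrow> raag_class V E (rep P) = P"
  by (auto simp: RAAG_carrier)

lemma exG_notin: "P \<in> carrier (RAAG V E) \<Longrightarrow> a \<notin> V \<Longrightarrow> exG a P = 0"
  by (auto simp: exG_def intro: ex_notin rep_carrier_words)

lemma mapw_step:
  assumes "(x, y) \<in> raag_step E" "x \<in> raag_words V"
    and "\<And>a b. a \<in> V \<Longrightarrow> b \<in> V \<Longrightarrow> {a, b} \<in> E \<Longrightarrow> {f a, f b} \<in> E'"
  shows "(mapw f x, mapw f y) \<in> raag_step E'"
  using assms(1)
proof (cases rule: raag_step.cases)
  case (cancel u c d w)
  then show ?thesis using raag_step.cancel[where u="mapw f u" and w="mapw f w" and a="f c" and b=d and E=E'] by simp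
next
  case (commute x' y' u w)
  have "fst x' \<in> V" "fst y' \<in> V" using commute assms(2) by auto
  then have "{fst (f (fst x'), snd x'), fst (f (fst y'), snd y')} \<in> E'" using assms(3) commute by simp
  then show ?thesis using commute raag_step.commute[where u="mapw f u" and w="mapw f w" and x="(f (fst x'), snd x')" and y="(f (fst y'), snd y')" and E=E'] by simp
qed

lemma mapw_words: "w \<in> raag_words V \<Longrightarrow> (\<And>a. a \<in> V \<Longrightarrow> f a \<in> V') \<Longrightarrow> mapw f w \<in> raag_words V'"
  by (induction w) auto

lemma mapw_eq:
  assumes "(x, y) \<in> raag_eq V E"
    and fV: "\<And>a. a \<in> V \<Longrightarrow> f a \<in> V'"
    and fE: "\<And>a b. a \<in> V \<Longrightarrow> b \<in> V \<Longrightarrow> {a, b} \<in> E \<Longrightarrow> {f a, f b} \<in> E'"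
  shows "(mapw f x, mapw f y) \<in> raag_eq V' E'"
  using assms(1) unfolding raag_eq_def
proof (induction rule: rtrancl_induct)
  case base then show ?case by simp
next
  case (step y z)
  have w: "mapw f y \<in> raag_words V'" "mapw f z \<in> raag_words V'" using step(2) mapw_words[of y V f V'] mapw_words[of z V f V'] fV by auto
  have "(mapw f y, mapw f z) \<in> raag_step E' \<or> (mapw f z, mapw f y) \<in> raag_step E'"
    using step(2) mapw_step[of y z E V f E'] mapw_step[of z y E V f E'] fE by auto
  then have "(mapw f y, mapw f z) \<in> (raag_step E' \<union> (raag_step E')\<inverse>) \<inter> (raag_words V' \<times> raag_words V')"
    using w by auto
  then show ?case using step(3) by (rule rtrancl_into_rtrancl[rotated])
qed

lemma raag_map_eq: "raag_map VL EL VG EG \<phi> Z = raag_class VG EG (mapw \<phi> (rep Z))"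
  by (simp add: raag_map_def mapw_def rep_def)

locale cov =
  fixes VL :: "'a set" and EL :: "'a set set" and VG :: "'b set" and EG :: "'b set set"
    and \<phi> :: "'a \<Rightarrow> 'b"
  assumes fgL: "finite_graph VL EL" and fgG: "finite_graph VG EG"
    and noisoL: "no_isolated_vertices VL EL"
    and cover: "covering_map VL EL VG EG \<phi>"
begin

abbreviation "G \<equiv> RAAG VL EL"
abbreviation "S \<equiv> carrier (RAAG VL EL)"

lemma finV: "finite VL" using fgL by (simp add: finite_graph_def)

lemma EV: "{u, v} \<in> EL \<Longrightarrow> u \<in> VL \<and> v \<in> VL"
  using fgL unfolding finite_graph_def simplicial_graph_def by (metis doubleton_eq_iff)

lemma noloopL: "{c} \<notin> EL"
  using fgL unfolding finite_graph_def simplicial_graph_def by (metis doubleton_eq_iff insert_absorb2)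

lemma noloopG: "{c} \<notin> EG"
  using fgG unfolding finite_graph_def simplicial_graph_def by (metis doubleton_eq_iff insert_absorb2)

lemma E\<phi>: "{u, v} \<in> EL \<Longrightarrow> \<phi> u \<noteq> \<phi> v"
  using cover noloopG unfolding covering_map_def by (metis insert_absorb2)

lemma E\<phi>G: "{u, v} \<in> EL \<Longrightarrow> {\<phi> u, \<phi> v} \<in> EG"
  using cover unfolding covering_map_def by blast

lemma \<phi>V: "u \<in> VL \<Longrightarrow> \<phi> u \<in> VG"
  using cover unfolding covering_map_def by blast

lemma injnb: "c \<in> VL \<Longrightarrow> inj_on \<phi> (nbrs EL c)"
  using cover unfolding covering_map_def bij_betw_def by blast

lemma noiso: "u \<in> VL \<Longrightarrow> \<exists>v. {u, v} \<in> EL"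
  using noisoL unfolding no_isolated_vertices_def nbrs_def by blast

lemma grp: "group G" by (rule RAAG_group)

lemma FD_auto: "F \<in> FD VL EL VG EG \<phi> \<Longrightarrow> F \<in> auto G"
  by (simp add: FD_def)

lemma FD_hom: "F \<in> FD VL EL VG EG \<phi> \<Longrightarrow> F \<in> hom G G"
  by (simp add: FD_def auto_def)

lemma FD_closed: "F \<in> FD VL EL VG EG \<phi> \<Longrightarrow> P \<in> S \<Longrightarrow> F P \<in> S"
  using FD_hom by (auto simp: hom_def)

lemma FD_map: "F \<in> FD VL EL VG EG \<phi> \<Longrightarrow> P \<in> S \<Longrightarrow> raag_map VL EL VG EG \<phi> (F P) = raag_map VL EL VG EG \<phi> P"
  by (simp add: FD_def)

end

context cov begin
lemma exG_gen: "exG a (gen V E u) = (if u = a then 1 else 0)"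
  by (simp add: gen_def sg_def)

lemma fiber_sum:
  assumes F: "F \<in> FD VL EL VG EG \<phi>" and u: "u \<in> VL"
  shows "(\<Sum>a\<in>{a\<in>VL. \<phi> a = x}. exG a (F (gen VL EL u))) = (if x = \<phi> u then 1 else 0)"
proof -
  let ?g = "gen VL EL u"
  have g: "?g \<in> S" using u by (rule gen_carrier)
  have Fg: "F ?g \<in> S" using FD_closed[OF F g] .
  have "raag_class VG EG (mapw \<phi> (rep (F ?g))) = raag_class VG EG (mapw \<phi> (rep ?g))"
    using FD_map[OF F g] by (simp add: raag_map_eq)
  then have "ex x (mapw \<phi> (rep (F ?g))) = ex x (mapw \<phi> (rep ?g))"
    unfolding raag_class_eq_iff by (rule ex_eq)
  moreover have "ex x (mapw \<phi> (rep (F ?g))) = (\<Sum>a\<in>{a\<in>VL. \<phi> a = x}. exG a (F ?g))"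
    using ex_mapw[OF rep_carrier_words[OF Fg] finV] by (simp add: exG_def)
  moreover have "ex x (mapw \<phi> (rep ?g)) = (\<Sum>a\<in>{a\<in>VL. \<phi> a = x}. exG a ?g)"
    using ex_mapw[OF rep_carrier_words[OF g] finV] by (simp add: exG_def)
  moreover have "(\<Sum>a\<in>{a\<in>VL. \<phi> a = x}. exG a ?g) = (\<Sum>a\<in>{a\<in>VL. \<phi> a = x}. (if u = a then 1 else 0))"
    by (simp only: exG_gen)
  moreover have "\<dots> = (if x = \<phi> u then 1 else 0)" using u finV by (auto simp: sum.delta)
  ultimately show ?thesis by simp
qed

lemma gen_commute:
  assumes "{u, v} \<in> EL"
  shows "gen VL EL u \<otimes>\<^bsub>G\<^esub> gen VL EL v = gen VL EL v \<otimes>\<^bsub>G\<^esub> gen VL EL u"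
proof -
  have uv: "u \<in> VL" "v \<in> VL" using EV[OF assms] by auto
  have st: "([] @ [(u, False), (v, False)] @ [], [] @ [(v, False), (u, False)] @ []) \<in> raag_step EL"
    using assms by (intro raag_step.commute) simp
  show ?thesis using raag_eq_step[OF st, of VL] uv
    by (simp add: gen_def RAAG_mult raag_class_eq_iff)
qed

lemma minor:
  assumes F: "F \<in> FD VL EL VG EG \<phi>" and uv: "{u, v} \<in> EL" and ab: "a \<noteq> b" "{a, b} \<notin> EL"
  shows "exG a (F (gen VL EL u)) * exG b (F (gen VL EL v)) = exG b (F (gen VL EL u)) * exG a (F (gen VL EL v))"
proof -
  interpret h: group_hom G G F
    using FD_hom[OF F] grp by (auto simp: group_hom_def group_hom_axioms_def)
  have g: "gen VL EL u \<in> S" "gen VL EL v \<in> S" using EV[OF uv] gen_carrier by auto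
  have "F (gen VL EL u) \<otimes>\<^bsub>G\<^esub> F (gen VL EL v) = F (gen VL EL u \<otimes>\<^bsub>G\<^esub> gen VL EL v)"
    using g by (simp only: h.hom_mult)
  also have "\<dots> = F (gen VL EL v \<otimes>\<^bsub>G\<^esub> gen VL EL u)" by (simp only: gen_commute[OF uv])
  also have "\<dots> = F (gen VL EL v) \<otimes>\<^bsub>G\<^esub> F (gen VL EL u)"
    using g by (simp only: h.hom_mult)
  finally have eq: "F (gen VL EL u) \<otimes>\<^bsub>G\<^esub> F (gen VL EL v) = F (gen VL EL v) \<otimes>\<^bsub>G\<^esub> F (gen VL EL u)" .
  have nl: "\<forall>c. {c} \<notin> EL" using noloopL by blast
  have "exG a (F (gen VL EL u)) * exG b (F (gen VL EL v)) = exG a (F (gen VL EL v)) * exG b (F (gen VL EL u))"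
    by (rule commute_minor[OF h.hom_closed[OF g(1)] h.hom_closed[OF g(2)] eq ab nl])
  then show ?thesis by (simp add: algebra_simps)
qed

lemma perm_FD:
  assumes F: "F \<in> FD VL EL VG EG \<phi>" and u: "u \<in> VL"
  shows "\<exists>a\<in>VL. \<phi> a = \<phi> u \<and> (\<forall>b. exG b (F (gen VL EL u)) = (if b = a then 1 else 0))"
proof (rule perm_lemma[where m="\<lambda>u a. exG a (F (gen VL EL u))" and EL=EL, OF finV])
  show "\<And>u v. {u, v} \<in> EL \<Longrightarrow> u \<in> VL \<and> v \<in> VL" by (rule EV)
  show "\<And>u v. {u, v} \<in> EL \<Longrightarrow> \<phi> u \<noteq> \<phi> v" by (rule E\<phi>)
  show "\<And>c. c \<in> VL \<Longrightarrow> inj_on \<phi> (nbrs EL c)" by (rule injnb)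
  show "\<And>u. u \<in> VL \<Longrightarrow> \<exists>v. {u, v} \<in> EL" by (rule noiso)
  show "\<And>u a. u \<in> VL \<Longrightarrow> a \<notin> VL \<Longrightarrow> exG a (F (gen VL EL u)) = 0"
    by (rule exG_notin[OF FD_closed[OF F gen_carrier]])
  show "\<And>u x. u \<in> VL \<Longrightarrow> (\<Sum>a\<in>{a\<in>VL. \<phi> a = x}. exG a (F (gen VL EL u))) = (if x = \<phi> u then 1 else 0)"
    by (rule fiber_sum[OF F])
  show "\<And>u v a b. {u, v} \<in> EL \<Longrightarrow> a \<in> VL \<Longrightarrow> b \<in> VL \<Longrightarrow> a \<noteq> b \<Longrightarrow> {a, b} \<notin> EL \<Longrightarrow>
      exG a (F (gen VL EL u)) * exG b (F (gen VL EL v)) = exG b (F (gen VL EL u)) * exG a (F (gen VL EL v))"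
    by (rule minor[OF F])
  show "u \<in> VL" by (rule u)
qed

definition sig :: "('a word set \<Rightarrow> 'a word set) \<Rightarrow> 'a \<Rightarrow> 'a" where
  "sig F = (\<lambda>u\<in>VL. THE a. \<forall>b. exG b (F (gen VL EL u)) = (if b = a then 1 else 0))"

lemma the_indicator:
  assumes "\<forall>b. f b = (if b = a then (1::int) else 0)"
  shows "(THE a. \<forall>b. f b = (if b = a then 1 else 0)) = a"
proof (rule the_equality)
  show "\<forall>b. f b = (if b = a then 1 else 0)" by (rule assms)
  fix a' assume "\<forall>b. f b = (if b = a' then 1 else 0)"
  then have "f a' = 1" by simp
  then show "a' = a" using assms by (auto split: if_splits)
qed

lemma sig_prop:
  assumes F: "F \<in> FD VL EL VG EG \<phi>" and u: "u \<in> VL"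
  shows "sig F u \<in> VL \<and> \<phi> (sig F u) = \<phi> u \<and> (\<forall>b. exG b (F (gen VL EL u)) = (if b = sig F u then 1 else 0))"
proof -
  obtain a where a: "a \<in> VL" "\<phi> a = \<phi> u" "\<forall>b. exG b (F (gen VL EL u)) = (if b = a then 1 else 0)"
    using perm_FD[OF F u] by blast
  have "sig F u = a" using u the_indicator[OF a(3)] by (simp add: sig_def)
  then show ?thesis using a by simp
qed

lemma sig_unique:
  assumes F: "F \<in> FD VL EL VG EG \<phi>" and u: "u \<in> VL"
    and "\<forall>b. exG b (F (gen VL EL u)) = (if b = a then 1 else 0)"
  shows "sig F u = a"
proof -
  have "exG a (F (gen VL EL u)) = 1" using assms(3) by simp
  then show ?thesis using sig_prop[OF F u] by (auto split: if_splits)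
qed

lemma sig_ext: "sig F \<in> extensional VL" by (simp add: sig_def)

lemma sig_edge:
  assumes F: "F \<in> FD VL EL VG EG \<phi>" and uv: "{u, v} \<in> EL"
  shows "{sig F u, sig F v} \<in> EL"
proof (rule ccontr)
  assume ne: "{sig F u, sig F v} \<notin> EL"
  have uV: "u \<in> VL" "v \<in> VL" using EV[OF uv] by auto
  note su = sig_prop[OF F uV(1)] and sv = sig_prop[OF F uV(2)]
  have "sig F u \<noteq> sig F v" using su sv E\<phi>[OF uv] by auto
  then show False using minor[OF F uv _ ne] su sv by simp
qed

lemma expand:
  assumes F: "F \<in> FD VL EL VG EG \<phi>" and w: "w \<in> raag_words VL"
  shows "exG a (F (raag_class VL EL w)) = (\<Sum>b\<in>{b\<in>VL. sig F b = a}. ex b w)"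
  by (rule hom_expand[OF FD_hom[OF F] finV _ w]) (simp add: sig_prop[OF F])

end



context cov begin

abbreviation "FDs \<equiv> FD VL EL VG EG \<phi>"
abbreviation "FDg \<equiv> FD_group VL EL VG EG \<phi>"
abbreviation "Dg \<equiv> deck_group VL EL \<phi>"
abbreviation "Ds \<equiv> deck VL EL \<phi>"

lemma FDg_carrier[simp]: "carrier FDg = FDs"
  by (simp add: FD_group_def)

lemma FD_Bij: "F \<in> FDs \<Longrightarrow> F \<in> Bij S"
  by (simp add: FD_def auto_def)

lemma FDg_mult: "F \<in> FDs \<Longrightarrow> F' \<in> FDs \<Longrightarrow> F \<otimes>\<^bsub>FDg\<^esub> F' = compose S F F'"
  using FD_Bij by (simp add: FD_group_def AutoGroup_def BijGroup_def)

lemma FDg_one: "\<one>\<^bsub>FDg\<^esub> = (\<lambda>x\<in>S. x)"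
  by (simp add: FD_group_def AutoGroup_def BijGroup_def)

lemma AG_carrier: "carrier (AutoGroup G) = auto G"
  by (simp add: AutoGroup_def)

lemma AG_mult: "F \<in> auto G \<Longrightarrow> F' \<in> auto G \<Longrightarrow> F \<otimes>\<^bsub>AutoGroup G\<^esub> F' = compose S F F'"
  by (simp add: AutoGroup_def BijGroup_def auto_def)

lemma id_FD: "(\<lambda>x\<in>S. x) \<in> FDs"
  using group.id_in_auto[OF grp] by (simp add: FD_def)

lemma FD_subgroup: "subgroup FDs (AutoGroup G)"
proof -
  interpret A: group "AutoGroup G" by (rule group.AutoGroup[OF grp])
  show ?thesis
  proof (rule A.subgroupI)
    show "FDs \<subseteq> carrier (AutoGroup G)" by (auto simp: AG_carrier FD_def)
    show "FDs \<noteq> {}" using id_FD by blast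
  next
    fix F assume F: "F \<in> FDs"
    let ?F' = "inv\<^bsub>AutoGroup G\<^esub> F"
    have Fa: "F \<in> carrier (AutoGroup G)" using F by (simp add: AG_carrier FD_def)
    have F'a: "?F' \<in> auto G" using A.inv_closed[OF Fa] by (simp add: AG_carrier)
    have "F \<otimes>\<^bsub>AutoGroup G\<^esub> ?F' = \<one>\<^bsub>AutoGroup G\<^esub>" using A.r_inv[OF Fa] .
    then have c: "compose S F ?F' = (\<lambda>x\<in>S. x)"
      using AG_mult[OF FD_auto[OF F] F'a] by (simp add: AutoGroup_def BijGroup_def)
    have "raag_map VL EL VG EG \<phi> (?F' g) = raag_map VL EL VG EG \<phi> g" if g: "g \<in> S" for g
    proof -
      have F'g: "?F' g \<in> S" using F'a g by (auto simp: auto_def hom_def)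
      have "F (?F' g) = g" using fun_cong[OF c, of g] g by (simp add: compose_def)
      then show ?thesis using FD_map[OF F F'g] by simp
    qed
    then show "?F' \<in> FDs" using F'a by (simp add: FD_def)
  next
    fix F F' assume F: "F \<in> FDs" and F': "F' \<in> FDs"
    have m: "F \<otimes>\<^bsub>AutoGroup G\<^esub> F' \<in> auto G"
      using A.m_closed[of F F'] F F' by (simp add: AG_carrier FD_def)
    have "raag_map VL EL VG EG \<phi> ((F \<otimes>\<^bsub>AutoGroup G\<^esub> F') g) = raag_map VL EL VG EG \<phi> g" if g: "g \<in> S" for g
      using AG_mult[OF FD_auto[OF F] FD_auto[OF F']] g FD_map[OF F FD_closed[OF F' g]] FD_map[OF F' g]
      by (simp add: compose_def)
    then show "F \<otimes>\<^bsub>AutoGroup G\<^esub> F' \<in> FDs" using m by (simp add: FD_def)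
  qed
qed

lemma FDg_group: "group FDg"
  unfolding FD_group_def by (rule subgroup.subgroup_is_group[OF FD_subgroup group.AutoGroup[OF grp]])

lemma FD_compose: "F \<in> FDs \<Longrightarrow> F' \<in> FDs \<Longrightarrow> compose S F F' \<in> FDs"
  using monoid.m_closed[OF group.is_monoid[OF FDg_group], of F F'] FDg_mult by simp

lemma sig_mult:
  assumes F: "F \<in> FDs" and F': "F' \<in> FDs"
  shows "sig (compose S F F') = compose VL (sig F) (sig F')"
proof (rule ext)
  fix u
  show "sig (compose S F F') u = compose VL (sig F) (sig F') u"
  proof (cases "u \<in> VL")
    case False
    then show ?thesis by (simp add: sig_def compose_def)
  next
    case u: True
    have g: "gen VL EL u \<in> S" using u by (rule gen_carrier)
    have Gg: "F' (gen VL EL u) \<in> S" using FD_closed[OF F' g] .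
    let ?w = "rep (F' (gen VL EL u))"
    have w: "?w \<in> raag_words VL" using rep_carrier_words[OF Gg] .
    have s': "sig F' u \<in> VL" using sig_prop[OF F' u] by simp
    have "\<forall>b. exG b (compose S F F' (gen VL EL u)) = (if b = sig F (sig F' u) then 1 else 0)"
    proof
      fix b
      have "exG b (compose S F F' (gen VL EL u)) = exG b (F (raag_class VL EL ?w))"
        using g carrier_class_rep[OF Gg] by (simp add: compose_def)
      also have "\<dots> = (\<Sum>c\<in>{c\<in>VL. sig F c = b}. ex c ?w)" by (rule expand[OF F w])
      also have "\<dots> = (\<Sum>c\<in>{c\<in>VL. sig F c = b}. (if c = sig F' u then 1 else 0))"
        using sig_prop[OF F' u] by (simp add: exG_def)
      also have "\<dots> = (if b = sig F (sig F' u) then 1 else 0)"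
        using s' finV by (auto simp: sum.delta)
      finally show "exG b (compose S F F' (gen VL EL u)) = (if b = sig F (sig F' u) then 1 else 0)" .
    qed
    then have "sig (compose S F F') u = sig F (sig F' u)" by (rule sig_unique[OF FD_compose[OF F F'] u])
    then show ?thesis using u by (simp add: compose_def)
  qed
qed

lemma sig_one: "sig (\<lambda>x\<in>S. x) = (\<lambda>u\<in>VL. u)"
proof (rule ext)
  fix u show "sig (\<lambda>x\<in>S. x) u = (\<lambda>u\<in>VL. u) u"
  proof (cases "u \<in> VL")
    case False then show ?thesis by (simp add: sig_def)
  next
    case True
    have "\<forall>b. exG b ((\<lambda>x\<in>S. x) (gen VL EL u)) = (if b = u then 1 else 0)"
      using gen_carrier[OF True] by (auto simp: exG_gen)
    then show ?thesis using sig_unique[OF id_FD True] True by simp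
  qed
qed

lemma Dg_carrier[simp]: "carrier Dg = Ds"
  by (simp add: deck_group_def)

lemma deck_Bij: "\<mu> \<in> Ds \<Longrightarrow> \<mu> \<in> Bij VL"
  by (simp add: deck_def graph_auts_def)

lemma Dg_mult: "\<mu> \<in> Ds \<Longrightarrow> \<nu> \<in> Ds \<Longrightarrow> \<mu> \<otimes>\<^bsub>Dg\<^esub> \<nu> = compose VL \<mu> \<nu>"
  using deck_Bij by (simp add: deck_group_def BijGroup_def)

lemma Dg_one: "\<one>\<^bsub>Dg\<^esub> = (\<lambda>x\<in>VL. x)"
  by (simp add: deck_group_def BijGroup_def)

lemma deck_props:
  assumes "\<mu> \<in> Ds"
  shows "\<And>u. u \<in> VL \<Longrightarrow> \<mu> u \<in> VL" "\<And>u. u \<in> VL \<Longrightarrow> \<phi> (\<mu> u) = \<phi> u"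
    "\<And>u v. u \<in> VL \<Longrightarrow> v \<in> VL \<Longrightarrow> {\<mu> u, \<mu> v} \<in> EL \<longleftrightarrow> {u, v} \<in> EL"
  using assms by (auto simp: deck_def graph_auts_def Bij_def bij_betw_def)

lemma deck_subgroup: "subgroup Ds (BijGroup VL)"
proof (rule group.subgroupI[OF group_BijGroup])
  show "Ds \<subseteq> carrier (BijGroup VL)" using deck_Bij by (auto simp: BijGroup_def)
  have "(\<lambda>x\<in>VL. x) \<in> Ds" using id_Bij by (auto simp: deck_def graph_auts_def)
  then show "Ds \<noteq> {}" by blast
next
  fix \<mu> assume mu: "\<mu> \<in> Ds"
  have B: "\<mu> \<in> Bij VL" using deck_Bij[OF mu] .
  let ?\<nu> = "\<lambda>x\<in>VL. inv_into VL \<mu> x"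
  have nuB: "?\<nu> \<in> Bij VL" using restrict_inv_into_Bij[OF B] .
  have bij: "bij_betw \<mu> VL VL" using B by (simp add: Bij_def)
  have inv1: "\<mu> (?\<nu> u) = u" if "u \<in> VL" for u
    using that bij by (simp add: bij_betw_inv_into_right)
  have nuV: "?\<nu> u \<in> VL" if "u \<in> VL" for u
    using that bij by (simp add: inv_into_into bij_betw_def)
  have "?\<nu> \<in> Ds"
    unfolding deck_def graph_auts_def
  proof (intro CollectI conjI ballI)
    show "?\<nu> \<in> Bij VL" by (rule nuB)
    fix u v assume uv: "u \<in> VL" "v \<in> VL"
    show "{?\<nu> u, ?\<nu> v} \<in> EL \<longleftrightarrow> {u, v} \<in> EL"
      using deck_props(3)[OF mu nuV[OF uv(1)] nuV[OF uv(2)]] inv1 uv by simp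
  next
    fix u assume u: "u \<in> VL"
    show "\<phi> (?\<nu> u) = \<phi> u" using deck_props(2)[OF mu nuV[OF u]] inv1[OF u] by simp
  qed
  then show "inv\<^bsub>BijGroup VL\<^esub> \<mu> \<in> Ds" using inv_BijGroup[OF B] by simp
next
  fix \<mu> \<nu> assume mu: "\<mu> \<in> Ds" and nu: "\<nu> \<in> Ds"
  have "compose VL \<mu> \<nu> \<in> Ds"
    unfolding deck_def graph_auts_def
  proof (intro CollectI conjI ballI)
    show "compose VL \<mu> \<nu> \<in> Bij VL" using compose_Bij deck_Bij mu nu by blast
    fix u v assume uv: "u \<in> VL" "v \<in> VL"
    show "{compose VL \<mu> \<nu> u, compose VL \<mu> \<nu> v} \<in> EL \<longleftrightarrow> {u, v} \<in> EL"
      using deck_props(3)[OF mu deck_props(1)[OF nu uv(1)] deck_props(1)[OF nu uv(2)]]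
        deck_props(3)[OF nu uv] uv by (simp add: compose_def)
  next
    fix u assume u: "u \<in> VL"
    show "\<phi> (compose VL \<mu> \<nu> u) = \<phi> u"
      using deck_props(2)[OF mu deck_props(1)[OF nu u]] deck_props(2)[OF nu u] u by (simp add: compose_def)
  qed
  then show "\<mu> \<otimes>\<^bsub>BijGroup VL\<^esub> \<nu> \<in> Ds" using deck_Bij mu nu by (simp add: BijGroup_def)
qed

lemma Dg_group: "group Dg"
  unfolding deck_group_def by (rule subgroup.subgroup_is_group[OF deck_subgroup group_BijGroup])

end



context cov begin

lemma FD_inverse:
  assumes F: "F \<in> FDs"
  obtains F' where "F' \<in> FDs" "compose S F F' = (\<lambda>x\<in>S. x)" "compose S F' F = (\<lambda>x\<in>S. x)"
proof -
  interpret A: group FDg by (rule FDg_group)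
  have Fc: "F \<in> carrier FDg" using F by simp
  let ?F' = "inv\<^bsub>FDg\<^esub> F"
  have F': "?F' \<in> FDs" using A.inv_closed[OF Fc] by simp
  have "compose S F ?F' = (\<lambda>x\<in>S. x)" using A.r_inv[OF Fc] FDg_mult[OF F F'] FDg_one by simp
  moreover have "compose S ?F' F = (\<lambda>x\<in>S. x)" using A.l_inv[OF Fc] FDg_mult[OF F' F] FDg_one by simp
  ultimately show ?thesis using that F' by blast
qed

lemma sig_in_deck:
  assumes F: "F \<in> FDs" shows "sig F \<in> Ds"
proof -
  obtain F' where F': "F' \<in> FDs" "compose S F F' = (\<lambda>x\<in>S. x)" "compose S F' F = (\<lambda>x\<in>S. x)"
    using FD_inverse[OF F] by blast
  have c1: "compose VL (sig F) (sig F') = (\<lambda>u\<in>VL. u)"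
    using sig_mult[OF F F'(1)] F'(2) sig_one by simp
  have c2: "compose VL (sig F') (sig F) = (\<lambda>u\<in>VL. u)"
    using sig_mult[OF F'(1) F] F'(3) sig_one by simp
  have i1: "sig F (sig F' u) = u" if "u \<in> VL" for u
    using fun_cong[OF c1, of u] that by (simp add: compose_def)
  have i2: "sig F' (sig F u) = u" if "u \<in> VL" for u
    using fun_cong[OF c2, of u] that by (simp add: compose_def)
  have V1: "sig F u \<in> VL" if "u \<in> VL" for u using sig_prop[OF F that] by simp
  have V2: "sig F' u \<in> VL" if "u \<in> VL" for u using sig_prop[OF F'(1) that] by simp
  have bij: "bij_betw (sig F) VL VL"
    by (rule bij_betw_byWitness[where f'="sig F'"]) (auto simp: i1 i2 V1 V2)
  show ?thesis
    unfolding deck_def graph_auts_def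
  proof (intro CollectI conjI ballI)
    show "sig F \<in> Bij VL" using bij sig_ext by (simp add: Bij_def)
    fix u v assume uv: "u \<in> VL" "v \<in> VL"
    show "{sig F u, sig F v} \<in> EL \<longleftrightarrow> {u, v} \<in> EL"
    proof
      assume "{sig F u, sig F v} \<in> EL"
      from sig_edge[OF F'(1) this] show "{u, v} \<in> EL" using i2 uv by simp
    next
      assume "{u, v} \<in> EL" then show "{sig F u, sig F v} \<in> EL" by (rule sig_edge[OF F])
    qed
  next
    fix u assume "u \<in> VL" then show "\<phi> (sig F u) = \<phi> u" using sig_prop[OF F] by simp
  qed
qed

lemma sig_hom: "sig \<in> hom FDg Dg"
proof (rule homI)
  fix F assume "F \<in> carrier FDg" then show "sig F \<in> carrier Dg" using sig_in_deck by simp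
next
  fix F F' assume "F \<in> carrier FDg" "F' \<in> carrier FDg"
  then show "sig (F \<otimes>\<^bsub>FDg\<^esub> F') = sig F \<otimes>\<^bsub>Dg\<^esub> sig F'"
    using FDg_mult sig_mult Dg_mult sig_in_deck by simp
qed

lemma sig_ghom: "group_hom FDg Dg sig"
  using FDg_group Dg_group sig_hom by (simp add: group_hom_def group_hom_axioms_def)

lemma kernel_eq: "kernel FDg Dg sig = FDs \<inter> IA G"
proof -
  have "F \<in> IA G \<longleftrightarrow> sig F = (\<lambda>u\<in>VL. u)" if F: "F \<in> FDs" for F
  proof
    assume IA: "F \<in> IA G"
    have ia: "\<forall>g\<in>S. \<forall>a. exG a (F g) = exG a g" using IA_iff[OF FD_auto[OF F]] IA by blast
    show "sig F = (\<lambda>u\<in>VL. u)"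
    proof (rule ext)
      fix u show "sig F u = (\<lambda>u\<in>VL. u) u"
      proof (cases "u \<in> VL")
        case False then show ?thesis by (simp add: sig_def)
      next
        case True
        have "\<forall>b. exG b (F (gen VL EL u)) = (if b = u then 1 else 0)"
          using ia gen_carrier[OF True] by (auto simp: exG_gen)
        then show ?thesis using sig_unique[OF F True] True by simp
      qed
    qed
  next
    assume s: "sig F = (\<lambda>u\<in>VL. u)"
    have "exG a (F g) = exG a g" if g: "g \<in> S" for g a
    proof -
      let ?w = "rep g"
      have w: "?w \<in> raag_words VL" using rep_carrier_words[OF g] .
      have "exG a (F g) = exG a (F (raag_class VL EL ?w))" using carrier_class_rep[OF g] by simp
      also have "\<dots> = (\<Sum>c\<in>{c\<in>VL. sig F c = a}. ex c ?w)" by (rule expand[OF F w])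
      also have "\<dots> = (\<Sum>c\<in>{c\<in>VL. c = a}. ex c ?w)" using s by (intro sum.cong) auto
      also have "\<dots> = ex a ?w"
      proof (cases "a \<in> VL")
        case True
        then have "{c\<in>VL. c = a} = {a}" by auto
        then show ?thesis by simp
      next
        case False
        then have "{c\<in>VL. c = a} = {}" by auto
        then show ?thesis using ex_notin[OF w False] by simp
      qed
      finally show ?thesis by (simp add: exG_def)
    qed
    then show "F \<in> IA G" using IA_iff[OF FD_auto[OF F]] by blast
  qed
  then show ?thesis unfolding kernel_def using Dg_one by auto
qed

definition Fm :: "('a \<Rightarrow> 'a) \<Rightarrow> 'a word set \<Rightarrow> 'a word set" where
  "Fm \<mu> = (\<lambda>P\<in>S. raag_class VL EL (mapw \<mu> (rep P)))"

lemma Fm_class: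
  assumes mu: "\<mu> \<in> Ds" and w: "w \<in> raag_words VL"
  shows "Fm \<mu> (raag_class VL EL w) = raag_class VL EL (mapw \<mu> w)"
proof -
  have "(mapw \<mu> w, mapw \<mu> (rep (raag_class VL EL w))) \<in> raag_eq VL EL"
    by (rule mapw_eq[OF rep_class]) (auto simp: deck_props[OF mu])
  then show ?thesis using class_carrier[OF w] by (simp add: Fm_def raag_class_eq_iff raag_eq_sym)
qed

lemma mapw_words_deck: "\<mu> \<in> Ds \<Longrightarrow> w \<in> raag_words VL \<Longrightarrow> mapw \<mu> w \<in> raag_words VL"
  using mapw_words deck_props(1) by blast

lemma Fm_inverse:
  assumes mu: "\<mu> \<in> Ds" and nu: "\<nu> \<in> Ds" and inv: "\<And>u. u \<in> VL \<Longrightarrow> \<mu> (\<nu> u) = u"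
    and P: "P \<in> S"
  shows "Fm \<mu> (Fm \<nu> P) = P"
proof -
  obtain w where w: "w \<in> raag_words VL" "P = raag_class VL EL w" using P by (auto simp: RAAG_carrier)
  have "mapw \<mu> (mapw \<nu> w) = w" using w(1) inv by (induction w) auto
  then show ?thesis using w Fm_class[OF nu] Fm_class[OF mu] mapw_words_deck[OF nu] by simp
qed

lemma Fm_FD:
  assumes mu: "\<mu> \<in> Ds"
  shows "Fm \<mu> \<in> FDs \<and> sig (Fm \<mu>) = \<mu>"
proof -
  interpret D: group Dg by (rule Dg_group)
  have muc: "\<mu> \<in> carrier Dg" using mu by simp
  let ?\<nu> = "inv\<^bsub>Dg\<^esub> \<mu>"
  have nu: "?\<nu> \<in> Ds" using D.inv_closed[OF muc] by simp
  have c1: "compose VL \<mu> ?\<nu> = (\<lambda>x\<in>VL. x)" using D.r_inv[OF muc] Dg_mult[OF mu nu] Dg_one by simp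
  have c2: "compose VL ?\<nu> \<mu> = (\<lambda>x\<in>VL. x)" using D.l_inv[OF muc] Dg_mult[OF nu mu] Dg_one by simp
  have i1: "\<mu> (?\<nu> u) = u" if "u \<in> VL" for u using fun_cong[OF c1, of u] that by (simp add: compose_def)
  have i2: "?\<nu> (\<mu> u) = u" if "u \<in> VL" for u using fun_cong[OF c2, of u] that by (simp add: compose_def)
  have closed: "Fm m P \<in> S" if "m \<in> Ds" "P \<in> S" for m P
    using that mapw_words_deck[OF that(1)] Fm_class[OF that(1)] by (auto simp: RAAG_carrier)
  have hom: "Fm \<mu> \<in> hom G G"
  proof (rule homI)
    fix P assume "P \<in> S" then show "Fm \<mu> P \<in> S" by (rule closed[OF mu])
  next
    fix P Q assume "P \<in> S" "Q \<in> S"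
    then obtain w w' where w: "w \<in> raag_words VL" "P = raag_class VL EL w"
      and w': "w' \<in> raag_words VL" "Q = raag_class VL EL w'" by (auto simp: RAAG_carrier)
    show "Fm \<mu> (P \<otimes>\<^bsub>G\<^esub> Q) = Fm \<mu> P \<otimes>\<^bsub>G\<^esub> Fm \<mu> Q"
      using w w' Fm_class[OF mu] mapw_words_deck[OF mu] by (simp add: RAAG_mult)
  qed
  have bij: "bij_betw (Fm \<mu>) S S"
    by (rule bij_betw_byWitness[where f'="Fm ?\<nu>"])
       (auto simp: Fm_inverse[OF mu nu i1] Fm_inverse[OF nu mu i2] closed[OF mu] closed[OF nu])
  have aut: "Fm \<mu> \<in> auto G"
    using hom bij by (simp add: auto_def Bij_def Fm_def)
  have map: "raag_map VL EL VG EG \<phi> (Fm \<mu> g) = raag_map VL EL VG EG \<phi> g" if g: "g \<in> S" for g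
  proof -
    have rm: "raag_map VL EL VG EG \<phi> (raag_class VL EL w) = raag_class VG EG (mapw \<phi> w)"
      if "w \<in> raag_words VL" for w
    proof -
      have "(mapw \<phi> w, mapw \<phi> (rep (raag_class VL EL w))) \<in> raag_eq VG EG"
        by (rule mapw_eq[OF rep_class]) (auto simp: \<phi>V E\<phi>G)
      then show ?thesis by (simp add: raag_map_eq raag_class_eq_iff raag_eq_sym)
    qed
    obtain w where w: "w \<in> raag_words VL" "g = raag_class VL EL w" using g by (auto simp: RAAG_carrier)
    have "mapw \<phi> (mapw \<mu> w) = mapw \<phi> w" using w(1) deck_props(2)[OF mu] by (induction w) auto
    then show ?thesis using w rm mapw_words_deck[OF mu] Fm_class[OF mu] by simp
  qed
  have FD: "Fm \<mu> \<in> FDs" using aut map by (simp add: FD_def)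
  have "sig (Fm \<mu>) u = \<mu> u" for u
  proof (cases "u \<in> VL")
    case False
    then show ?thesis using sig_ext deck_Bij[OF mu] by (simp add: Bij_def extensional_def)
  next
    case True
    have "Fm \<mu> (gen VL EL u) = gen VL EL (\<mu> u)"
      using Fm_class[OF mu, of "[(u, False)]"] True by (simp add: gen_def)
    then have "\<forall>b. exG b (Fm \<mu> (gen VL EL u)) = (if b = \<mu> u then 1 else 0)"
      by (auto simp: exG_gen)
    then show ?thesis by (rule sig_unique[OF FD True])
  qed
  then show ?thesis using FD by auto
qed

lemma sig_onto: "sig ` FDs = Ds"
  using sig_in_deck Fm_FD by (auto intro: image_eqI[OF sym])

theorem main:
  "FDs \<inter> IA G \<lhd> FDg \<and> FDg Mod (FDs \<inter> IA G) \<cong> Dg"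
proof -
  interpret h: group_hom FDg Dg sig by (rule sig_ghom)
  show ?thesis using h.normal_kernel h.FactGroup_iso sig_onto kernel_eq by simp
qed

end

theorem theorem7p3:
  fixes VL :: "'a set" and EL :: "'a set set" and VG :: "'b set" and EG :: "'b set set"
    and \<phi> :: "'a \<Rightarrow> 'b"
  assumes "finite_graph VL EL" and "finite_graph VG EG"
    and "no_isolated_vertices VL EL" and "no_isolated_vertices VG EG"
    and "regular_covering VL EL VG EG \<phi>"
  shows "FD VL EL VG EG \<phi> \<inter> IA (RAAG VL EL) \<lhd> FD_group VL EL VG EG \<phi>
    \<and> FD_group VL EL VG EG \<phi> Mod (FD VL EL VG EG \<phi> \<inter> IA (RAAG VL EL)) \<cong> deck_group VL EL \<phi>"
proof -
  interpret cov VL EL VG EG \<phi>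
    using assms by (unfold_locales) (auto simp: regular_covering_def)
  show ?thesis by (rule main)
qed


end
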